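(* Let $Q$ be a right Leibniz algebra over $\mathbb{F}$, $L$ a subalgebra of $Q$, and $q\in Q$. Then $(L:q)$ is an ideal of $L$. Moreover, it is maximal among the ideals $I$ of $L$ such that $[I,q]\subseteq L$ and $[q,I]\subseteq L$, in the sense that every ideal $I$ of $L$ with $[I,q]\subseteq L$ and $[q,I]\subseteq L$ is contained in $(L:q)$.
   Context: A right Leibniz algebra satisfies $[x,[y,z]]=[[x,y],z]-[[x,z],y]$. Ideals of $L$: subspaces $I$ with $[I,L]\subseteq I$, $[L,I]\subseteq I$. For $x\in L$ let $R_x(u)=[u,x]$, $L_x(u)=[x,u]$ as operators on $Q$, and $\mathscr{A}(L)$ the associative algebra generated by $\{R_x,L_y:x,y\in L\}$. ${}_L(q)=\mathbb{F}q+\{\sum_{i=1}^n\xi_i(q):\xi_i\in\mathscr{A}(L),n\in\mathbb{N}\}$, and $(L:q)=\{x\in L:[x,{}_L(q)]\subseteq L,\ [{}_L(q),x]\subseteq L\}$. *)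

theory Defs
  imports Complex_Main
begin

definition right_leibniz_algebra ::
  "('k::field \<Rightarrow> 'v::ab_group_add \<Rightarrow> 'v) \<Rightarrow> ('v \<Rightarrow> 'v \<Rightarrow> 'v) \<Rightarrow> bool" where
  "right_leibniz_algebra scale br \<longleftrightarrow>
     vector_space scale \<and>
     (\<forall>x y z. br (x + y) z = br x z + br y z) \<and>
     (\<forall>x y z. br x (y + z) = br x y + br x z) \<and>
     (\<forall>c x y. br (scale c x) y = scale c (br x y)) \<and>
     (\<forall>c x y. br x (scale c y) = scale c (br x y)) \<and>
     (\<forall>x y z. br x (br y z) = br (br x y) z - br (br x z) y)"

definition subalgebra ::
  "('k::field \<Rightarrow> 'v::ab_group_add \<Rightarrow> 'v) \<Rightarrow> ('v \<Rightarrow> 'v \<Rightarrow> 'v) \<Rightarrow> 'v set \<Rightarrow> bool" where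
  "subalgebra scale br L \<longleftrightarrow> module.subspace scale L \<and> (\<forall>x\<in>L. \<forall>y\<in>L. br x y \<in> L)"

definition leibniz_ideal ::
  "('k::field \<Rightarrow> 'v::ab_group_add \<Rightarrow> 'v) \<Rightarrow> ('v \<Rightarrow> 'v \<Rightarrow> 'v) \<Rightarrow> 'v set \<Rightarrow> 'v set \<Rightarrow> bool" where
  "leibniz_ideal scale br L I \<longleftrightarrow> module.subspace scale I \<and> I \<subseteq> L \<and>
     (\<forall>x\<in>I. \<forall>y\<in>L. br x y \<in> I \<and> br y x \<in> I)"

inductive_set opalg ::
  "('k::field \<Rightarrow> 'v::ab_group_add \<Rightarrow> 'v) \<Rightarrow> ('v \<Rightarrow> 'v \<Rightarrow> 'v) \<Rightarrow> 'v set \<Rightarrow> ('v \<Rightarrow> 'v) set"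
  for scale br L where
  right_mult: "x \<in> L \<Longrightarrow> (\<lambda>u. br u x) \<in> opalg scale br L"
| left_mult: "y \<in> L \<Longrightarrow> (\<lambda>u. br y u) \<in> opalg scale br L"
| comp: "f \<in> opalg scale br L \<Longrightarrow> g \<in> opalg scale br L \<Longrightarrow> f \<circ> g \<in> opalg scale br L"
| add: "f \<in> opalg scale br L \<Longrightarrow> g \<in> opalg scale br L \<Longrightarrow> (\<lambda>u. f u + g u) \<in> opalg scale br L"
| smult: "f \<in> opalg scale br L \<Longrightarrow> (\<lambda>u. scale c (f u)) \<in> opalg scale br L"

definition leibniz_gen_set ::
  "('k::field \<Rightarrow> 'v::ab_group_add \<Rightarrow> 'v) \<Rightarrow> ('v \<Rightarrow> 'v \<Rightarrow> 'v) \<Rightarrow> 'v set \<Rightarrow> 'v \<Rightarrow> 'v set" where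
  "leibniz_gen_set scale br L q = {scale c q + (\<Sum>i<n. \<xi> i q) | c (n::nat) \<xi>. \<forall>i<n. \<xi> i \<in> opalg scale br L}"

definition colon ::
  "('k::field \<Rightarrow> 'v::ab_group_add \<Rightarrow> 'v) \<Rightarrow> ('v \<Rightarrow> 'v \<Rightarrow> 'v) \<Rightarrow> 'v set \<Rightarrow> 'v \<Rightarrow> 'v set" where
  "colon scale br L q = {x \<in> L. \<forall>z \<in> leibniz_gen_set scale br L q. br x z \<in> L \<and> br z x \<in> L}"

end

theory Submission
  imports Defs
begin

locale rla_ctx =
  fixes scale :: "'k::field \<Rightarrow> 'v::ab_group_add \<Rightarrow> 'v"
    and br :: "'v \<Rightarrow> 'v \<Rightarrow> 'v"
    and L :: "'v set"
  assumes rla: "right_leibniz_algebra scale br"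
    and sub: "subalgebra scale br L"
begin

lemma vs: "vector_space scale" using rla unfolding right_leibniz_algebra_def by blast
lemma M: "module scale" using vs module_iff_vector_space by blast
lemma addl: "br (x + y) z = br x z + br y z" using rla unfolding right_leibniz_algebra_def by blast
lemma addr: "br x (y + z) = br x y + br x z" using rla unfolding right_leibniz_algebra_def by blast
lemma scl: "br (scale c x) y = scale c (br x y)" using rla unfolding right_leibniz_algebra_def by blast
lemma scr: "br x (scale c y) = scale c (br x y)" using rla unfolding right_leibniz_algebra_def by blast
lemma leib: "br x (br y z) = br (br x y) z - br (br x z) y" using rla unfolding right_leibniz_algebra_def by blast

lemma leib1: "br (br x y) z = br x (br y z) + br (br x z) y" using leib[of x y z] by (simp add: algebra_simps)

lemma zl: "br 0 z = 0" using addl[of 0 0 z] by simp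
lemma zr: "br z 0 = 0" using addr[of z 0 0] by simp

lemma subL: "module.subspace scale L" using sub unfolding subalgebra_def by blast
lemma closL: "x \<in> L \<Longrightarrow> y \<in> L \<Longrightarrow> br x y \<in> L" using sub unfolding subalgebra_def by blast

lemma L0: "0 \<in> L" using module.subspace_0[OF M subL] .
lemma Ladd: "x \<in> L \<Longrightarrow> y \<in> L \<Longrightarrow> x + y \<in> L" using module.subspace_add[OF M subL] by blast
lemma Lsc: "x \<in> L \<Longrightarrow> scale c x \<in> L" using module.subspace_scale[OF M subL] by blast
lemma Ldiff: "x \<in> L \<Longrightarrow> y \<in> L \<Longrightarrow> x - y \<in> L" using module.subspace_diff[OF M subL] by blast

lemma opalg_lin:
  assumes "f \<in> opalg scale br L"
  shows "(\<forall>u v. f (u + v) = f u + f v) \<and> (\<forall>c u. f (scale c u) = scale c (f u))"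
  using assms
proof induction
  case (right_mult x) then show ?case by (simp add: addl scl)
next
  case (left_mult y) then show ?case by (simp add: addr scr)
next
  case (comp f g) then show ?case by simp
next
  case (add f g) then show ?case
    using module.scale_right_distrib[OF M] by (simp add: algebra_simps)
next
  case (smult f c) then show ?case
    using module.scale_right_distrib[OF M]
      module.scale_scale[OF M] by (simp add: mult.commute)
qed

lemma opalg_sum:
  assumes "f \<in> opalg scale br L"
  shows "f (\<Sum>i<(n::nat). g i) = (\<Sum>i<n. f (g i))"
proof (induction n)
  case 0
  have "f 0 = f 0 + f 0" using opalg_lin[OF assms] by (metis add.right_neutral)
  then show ?case by simp
next
  case (Suc n) then show ?case using opalg_lin[OF assms] by simp
qed

lemma br_sum_l: "br (\<Sum>i<(n::nat). g i) x = (\<Sum>i<n. br (g i) x)"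
  by (induction n) (simp_all add: zl addl)
lemma br_sum_r: "br x (\<Sum>i<(n::nat). g i) = (\<Sum>i<n. br x (g i))"
  by (induction n) (simp_all add: zr addr)

lemma gen_closed:
  assumes "z \<in> leibniz_gen_set scale br L q" "y \<in> L"
  shows "br z y \<in> leibniz_gen_set scale br L q \<and> br y z \<in> leibniz_gen_set scale br L q"
proof -
  obtain c \<xi> and n :: nat where z: "z = scale c q + (\<Sum>i<n. \<xi> i q)" and xi: "\<forall>i<n. \<xi> i \<in> opalg scale br L"
    using assms(1) unfolding leibniz_gen_set_def by blast
  have R: "(\<lambda>u. br u y) \<in> opalg scale br L" using assms(2) by (rule opalg.right_mult)
  have Lm: "(\<lambda>u. br y u) \<in> opalg scale br L" using assms(2) by (rule opalg.left_mult)
  define \<eta> where "\<eta> = (\<lambda>i. if i < n then (\<lambda>u. br u y) \<circ> \<xi> i else (\<lambda>u. scale c (br u y)))"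
  have e1: "\<forall>i<Suc n. \<eta> i \<in> opalg scale br L"
    using xi R by (auto simp: \<eta>_def less_Suc_eq intro: opalg.comp opalg.smult)
  have "br z y = scale 0 q + (\<Sum>i<Suc n. \<eta> i q)"
    using module.scale_zero_left[OF M]
    by (simp add: z addl scl br_sum_l \<eta>_def add.commute)
  hence A: "br z y \<in> leibniz_gen_set scale br L q"
    unfolding leibniz_gen_set_def using e1 by blast
  define \<theta> where "\<theta> = (\<lambda>i. if i < n then (\<lambda>u. br y u) \<circ> \<xi> i else (\<lambda>u. scale c (br y u)))"
  have e2: "\<forall>i<Suc n. \<theta> i \<in> opalg scale br L"
    using xi Lm by (auto simp: \<theta>_def less_Suc_eq intro: opalg.comp opalg.smult)
  have "br y z = scale 0 q + (\<Sum>i<Suc n. \<theta> i q)"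
    using module.scale_zero_left[OF M]
    by (simp add: z addr scr br_sum_r \<theta>_def add.commute)
  hence B: "br y z \<in> leibniz_gen_set scale br L q"
    unfolding leibniz_gen_set_def using e2 by blast
  show ?thesis using A B by blast
qed

lemma colon_ideal: "leibniz_ideal scale br L (colon scale br L q)"
proof -
  let ?G = "leibniz_gen_set scale br L q"
  let ?C = "colon scale br L q"
  have C: "x \<in> ?C \<longleftrightarrow> x \<in> L \<and> (\<forall>z\<in>?G. br x z \<in> L \<and> br z x \<in> L)" for x
    unfolding colon_def by blast
  have sp: "module.subspace scale ?C"
    unfolding module.subspace_def[OF M]
  proof (intro conjI ballI allI)
    show "0 \<in> ?C" using C L0 zl zr by simp
  next
    fix x y assume "x \<in> ?C" "y \<in> ?C"
    then show "x + y \<in> ?C" using C Ladd addl addr by simp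
  next
    fix c x assume "x \<in> ?C"
    then show "scale c x \<in> ?C" using C Lsc scl scr by simp
  qed
  have cl: "br x y \<in> ?C \<and> br y x \<in> ?C" if x: "x \<in> ?C" and y: "y \<in> L" for x y
  proof -
    have xL: "x \<in> L" using x C by blast
    have xz: "\<And>z. z \<in> ?G \<Longrightarrow> br x z \<in> L \<and> br z x \<in> L" using x C by blast
    have "br (br x y) z \<in> L \<and> br z (br x y) \<in> L \<and> br (br y x) z \<in> L \<and> br z (br y x) \<in> L"
      if z: "z \<in> ?G" for z
    proof -
      have yz: "br y z \<in> ?G" "br z y \<in> ?G" using gen_closed[OF z y] by auto
      have a: "br (br x y) z \<in> L" unfolding leib1[of x y z]
        by (rule Ladd) (use xz[OF yz(1)] xz[OF z] y closL in blast)+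
      have b: "br z (br x y) \<in> L" unfolding leib[of z x y]
        by (rule Ldiff) (use xz[OF yz(2)] xz[OF z] y xL closL in blast)+
      have c: "br (br y x) z \<in> L" unfolding leib1[of y x z]
        by (rule Ladd) (use xz[OF yz(1)] xz[OF z] y xL closL in blast)+
      have d: "br z (br y x) \<in> L" unfolding leib[of z y x]
        by (rule Ldiff) (use xz[OF yz(2)] xz[OF z] y xL closL in blast)+
      show ?thesis using a b c d by blast
    qed
    then show ?thesis using C xL y closL by auto
  qed
  show ?thesis unfolding leibniz_ideal_def using sp cl C by blast
qed

lemma colon_max:
  assumes I: "leibniz_ideal scale br L I" and Iq: "\<forall>x\<in>I. br x q \<in> L \<and> br q x \<in> L"
  shows "I \<subseteq> colon scale br L q"
proof -
  define G' where "G' = {w. \<forall>x\<in>I. br x w \<in> L \<and> br w x \<in> L}"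
  have IL: "I \<subseteq> L" and Icl: "\<And>x y. x \<in> I \<Longrightarrow> y \<in> L \<Longrightarrow> br x y \<in> I \<and> br y x \<in> I"
    using I unfolding leibniz_ideal_def by blast+
  have G0: "0 \<in> G'" unfolding G'_def using zl zr L0 by simp
  have Gadd: "u + v \<in> G'" if "u \<in> G'" "v \<in> G'" for u v
    using that unfolding G'_def using addl addr Ladd by simp
  have Gsc: "scale c u \<in> G'" if "u \<in> G'" for c u
    using that unfolding G'_def using scl scr Lsc by simp
  have GR: "br w y \<in> G' \<and> br y w \<in> G'" if w: "w \<in> G'" and y: "y \<in> L" for w y
  proof -
    have "br x (br w y) \<in> L \<and> br (br w y) x \<in> L \<and> br x (br y w) \<in> L \<and> br (br y w) x \<in> L"
      if x: "x \<in> I" for x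
    proof -
      have wx: "br x w \<in> L" "br w x \<in> L" using w x unfolding G'_def by auto
      have xy: "br x y \<in> I" "br y x \<in> I" using Icl[OF x y] by auto
      have wxy: "br (br x y) w \<in> L" "br w (br y x) \<in> L" "br (br y x) w \<in> L"
        using w xy unfolding G'_def by auto
      have a: "br x (br w y) \<in> L" unfolding leib[of x w y]
        by (rule Ldiff) (use wx wxy y closL in blast)+
      have b: "br (br w y) x \<in> L" unfolding leib1[of w y x]
        by (rule Ladd) (use wx wxy y closL in blast)+
      have c: "br x (br y w) \<in> L" unfolding leib[of x y w]
        by (rule Ldiff) (use wx wxy y closL in blast)+
      have d: "br (br y w) x \<in> L" unfolding leib1[of y w x]
        by (rule Ladd) (use wx wxy y closL in blast)+
      show ?thesis using a b c d by blast
    qed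
    then show ?thesis unfolding G'_def by blast
  qed
  have opG: "\<forall>w\<in>G'. f w \<in> G'" if "f \<in> opalg scale br L" for f
    using that
  proof induction
    case (right_mult x) then show ?case using GR by blast
  next
    case (left_mult y) then show ?case using GR by blast
  next
    case (comp f g) then show ?case by simp
  next
    case (add f g) then show ?case using Gadd by blast
  next
    case (smult f c) then show ?case using Gsc by blast
  qed
  have qG: "q \<in> G'" unfolding G'_def using Iq by blast
  have sumG: "(\<forall>i<n. \<xi> i \<in> opalg scale br L) \<Longrightarrow> (\<Sum>i<(n::nat). \<xi> i q) \<in> G'" for n \<xi>
    by (induction n) (use G0 Gadd opG qG in auto)
  have "z \<in> G'" if "z \<in> leibniz_gen_set scale br L q" for z
    using that unfolding leibniz_gen_set_def using sumG Gadd Gsc qG by blast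
  then show ?thesis unfolding colon_def G'_def using IL by blast
qed

end

theorem proposition3p1:
  fixes scale :: "'k::field \<Rightarrow> 'v::ab_group_add \<Rightarrow> 'v"
    and br :: "'v \<Rightarrow> 'v \<Rightarrow> 'v"
    and L :: "'v set" and q :: 'v
  assumes "right_leibniz_algebra scale br"
    and "subalgebra scale br L"
  shows "leibniz_ideal scale br L (colon scale br L q) \<and>
         (\<forall>I. leibniz_ideal scale br L I \<and> (\<forall>x\<in>I. br x q \<in> L \<and> br q x \<in> L)
              \<longrightarrow> I \<subseteq> colon scale br L q)"
proof -
  interpret rla_ctx scale br L using assms by unfold_locales
  show ?thesis using colon_ideal colon_max by blast
qed

end
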